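(* Let $n>1$ be square-free, let $r,t'\in\mathbb{Z}$ with $\gcd(r,n)=1$, and let $t=\gcd(t',n)$. Then \[\mathsf{c}(\mathrm{D}_{2n}\setminus\{1\},a_{n,r,t'})=\mathsf{c}(U_n,a_{n,r,0})+\mathsf{c}(V_n,a_{n,r,t}),\] where $\mathsf{c}(U_n,a_{n,r,0})=\sum_{d>1,\ d\mid n}\phi(d)/|r|_d$ and \[\mathsf{c}(V_n,a_{n,r,t})=\sum_{(d,\ell)}\frac{d}{\kappa(n,r,t)}\,\phi\!\left(\frac{|r|_n}{\ell\,\gcd\left(\kappa(d,r,t),|r|_n\right)}\right),\] the sum running over pairs of positive integers $(d,\ell)$ with $d\mid n$, $\ell\mid \frac{|r|_n}{\gcd(\kappa(d,r,t),|r|_n)}$ and $\gcd(r^{\ell\kappa(d,r,t)}-1,n)=d$.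
   Context: $\mathrm{D}_{2n}=\langle u_n,v_n\mid u_n^n=1=v_n^2,\ v_nu_nv_n=u_n^{-1}\rangle$. For integers $r,t$ with $\gcd(r,n)=1$, $a_{n,r,t}$ is the automorphism with $u_n^i\mapsto u_n^{ri}$, $u_n^jv_n\mapsto u_n^{rj+t}v_n$. $U_n:=\langle u_n\rangle\setminus\{1\}$, $V_n:=\{u_n^iv_n:0\le i\le n-1\}$. For a set $\Omega$ invariant under an automorphism $a$, $\mathsf{c}(\Omega,a)$ is the number of cycles (including fixed points) of the permutation induced by $a$ on $\Omega$. $|r|_m$ is the multiplicative order of $r$ mod $m$ (with $|r|_1=1$); $S_k(x):=1+x+\cdots+x^{k-1}$, $S_0=0$; $\kappa(m,r,t):=\dfrac{m|r|_m}{\gcd(m,tS_{|r|_m}(r))}$; $\phi$ is Euler's function. *)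

theory Defs
  imports "HOL-Computational_Algebra.Computational_Algebra" "HOL-Number_Theory.Number_Theory"
begin

text \<open>Concrete model of the dihedral group D_{2n}: the pair (i, False) stands for u_n^i
  and (i, True) for u_n^i v_n, with 0 \<le> i < n.\<close>

definition dihedral :: "nat \<Rightarrow> (int \<times> bool) set" where
  "dihedral n = {(i, b). 0 \<le> i \<and> i < int n}"

definition dih_one :: "int \<times> bool" where
  "dih_one = (0, False)"

definition U_set :: "nat \<Rightarrow> (int \<times> bool) set" where
  "U_set n = {(i, False) | i. 1 \<le> i \<and> i < int n}"

definition V_set :: "nat \<Rightarrow> (int \<times> bool) set" where
  "V_set n = {(i, True) | i. 0 \<le> i \<and> i < int n}"

definition aut :: "nat \<Rightarrow> int \<Rightarrow> int \<Rightarrow> int \<times> bool \<Rightarrow> int \<times> bool" where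
  "aut n r t x = (if snd x then ((r * fst x + t) mod int n, True)
                  else ((r * fst x) mod int n, False))"

definition ncycles :: "'a set \<Rightarrow> ('a \<Rightarrow> 'a) \<Rightarrow> nat" where
  "ncycles \<Omega> f = card ((\<lambda>x. {(f ^^ k) x | k. True}) ` \<Omega>)"

text \<open>Multiplicative order of r modulo m (equals 1 for m = 1).\<close>

definition mord :: "nat \<Rightarrow> int \<Rightarrow> nat" where
  "mord m r = (LEAST k::nat. 0 < k \<and> [r ^ k = 1] (mod int m))"

definition Ssum :: "nat \<Rightarrow> int \<Rightarrow> int" where
  "Ssum k x = (\<Sum>i<k. x ^ i)"

definition kappa :: "nat \<Rightarrow> int \<Rightarrow> int \<Rightarrow> nat" where
  "kappa m r t = nat ((int m * int (mord m r)) div gcd (int m) (t * Ssum (mord m r) r))"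

end

theory Submission
  imports Defs
begin


definition orb :: "('a \<Rightarrow> 'a) \<Rightarrow> 'a \<Rightarrow> 'a set" where
  "orb f x = {(f ^^ k) x | k. True}"

definition per :: "('a \<Rightarrow> 'a) \<Rightarrow> 'a \<Rightarrow> nat" where
  "per f x = (LEAST k. 0 < k \<and> (f ^^ k) x = x)"

lemma funpow_mult_id: "(f ^^ N) x = x \<Longrightarrow> (f ^^ (N * q)) x = x"
  by (induction q) (auto simp: funpow_add)

locale permN =
  fixes S :: "'a set" and f :: "'a \<Rightarrow> 'a" and N :: nat
  assumes fin: "finite S" and maps: "\<And>x. x \<in> S \<Longrightarrow> f x \<in> S"
    and Npos: "N > 0" and Nid: "\<And>x. x \<in> S \<Longrightarrow> (f ^^ N) x = x"
begin

lemma iter_in: "x \<in> S \<Longrightarrow> (f ^^ k) x \<in> S"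
  by (induction k) (auto intro: maps)

lemma per_basic: assumes "x \<in> S" shows "0 < per f x" "(f ^^ per f x) x = x" "per f x \<le> N"
proof -
  have ex: "0 < N \<and> (f ^^ N) x = x" using Npos Nid assms by auto
  show "0 < per f x" "(f ^^ per f x) x = x"
    using LeastI[of "\<lambda>k. 0 < k \<and> (f ^^ k) x = x", OF ex] unfolding per_def by auto
  show "per f x \<le> N" using Least_le[of "\<lambda>k. 0 < k \<and> (f ^^ k) x = x", OF ex] unfolding per_def by auto
qed

lemma iter_mod: assumes "x \<in> S" shows "(f ^^ k) x = (f ^^ (k mod per f x)) x"
proof -
  have "(f ^^ k) x = (f ^^ (k mod per f x)) ((f ^^ (per f x * (k div per f x))) x)"
    by (metis funpow_add o_apply div_mult_mod_eq mult.commute add.commute)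
  also have "(f ^^ (per f x * (k div per f x))) x = x"
    using funpow_mult_id per_basic[OF assms] by metis
  finally show ?thesis .
qed

lemma per_dvd: assumes "x \<in> S" shows "(f ^^ k) x = x \<longleftrightarrow> per f x dvd k"
proof
  assume h: "(f ^^ k) x = x"
  show "per f x dvd k"
  proof (rule ccontr)
    assume "\<not> per f x dvd k"
    then have "0 < k mod per f x" by (simp add: mod_greater_zero_iff_not_dvd)
    moreover have "(f ^^ (k mod per f x)) x = x" using h iter_mod[OF assms, of k] by simp
    ultimately have "per f x \<le> k mod per f x" unfolding per_def by (simp add: Least_le)
    moreover have "k mod per f x < per f x" using per_basic[OF assms] by simp
    ultimately show False by simp
  qed
next
  assume "per f x dvd k"
  then show "(f ^^ k) x = x" using iter_mod[OF assms, of k] by simp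
qed

lemma orb_eq: assumes "x \<in> S" shows "orb f x = (\<lambda>k. (f ^^ k) x) ` {..<per f x}"
proof
  show "orb f x \<subseteq> (\<lambda>k. (f ^^ k) x) ` {..<per f x}"
  proof
    fix y assume "y \<in> orb f x"
    then obtain k where k: "y = (f ^^ k) x" unfolding orb_def by auto
    then have "y = (f ^^ (k mod per f x)) x" using iter_mod[OF assms] by simp
    moreover have "k mod per f x \<in> {..<per f x}" using per_basic[OF assms] by simp
    ultimately show "y \<in> (\<lambda>k. (f ^^ k) x) ` {..<per f x}" by blast
  qed
  show "(\<lambda>k. (f ^^ k) x) ` {..<per f x} \<subseteq> orb f x" unfolding orb_def by auto
qed

lemma orb_inj: assumes "x \<in> S" shows "inj_on (\<lambda>k. (f ^^ k) x) {..<per f x}"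
proof (rule inj_onI)
  fix a b assume a: "a \<in> {..<per f x}" and b: "b \<in> {..<per f x}" and e: "(f ^^ a) x = (f ^^ b) x"
  have gen: "a' = b'" if a': "a' < per f x" "b' < per f x" "a' \<le> b'" "(f ^^ a') x = (f ^^ b') x" for a' b'
  proof -
    have "(f ^^ (per f x - b' + a')) x = (f ^^ (per f x - b')) ((f ^^ a') x)" by (simp add: funpow_add)
    also have "\<dots> = (f ^^ (per f x - b')) ((f ^^ b') x)" using a' by simp
    also have "\<dots> = (f ^^ (per f x - b' + b')) x" by (simp add: funpow_add)
    also have "\<dots> = x" using a' per_basic[OF assms] by simp
    finally have "per f x dvd per f x - b' + a'" using per_dvd[OF assms] by simp
    moreover have "0 < per f x - b' + a'" using a' by simp
    ultimately have "per f x \<le> per f x - b' + a'" by (simp add: dvd_imp_le)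
    then show ?thesis using a' by simp
  qed
  show "a = b" using a b e gen[of a b] gen[of b a] by (cases "a \<le> b") auto
qed

lemma card_orb: assumes "x \<in> S" shows "card (orb f x) = per f x"
proof -
  have "card (orb f x) = card {..<per f x}"
    unfolding orb_eq[OF assms] by (rule card_image[OF orb_inj[OF assms]])
  then show ?thesis by simp
qed

lemma orb_sub: "x \<in> S \<Longrightarrow> orb f x \<subseteq> S"
  unfolding orb_def using iter_in by auto

lemma orb_self: "x \<in> orb f x"
  unfolding orb_def by (auto intro: exI[of _ 0])

lemma orb_same: assumes "x \<in> S" "y \<in> orb f x" shows "orb f y = orb f x"
proof -
  obtain j where y: "y = (f ^^ j) x" using assms unfolding orb_def by auto
  have 1: "orb f y \<subseteq> orb f x" unfolding orb_def y by clarsimp (metis comp_apply funpow_add)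
  have "(f ^^ (N * j - j)) y = (f ^^ (N * j - j + j)) x" unfolding y by (simp add: funpow_add)
  also have "N * j - j + j = N * j"
  proof -
    have "1 * j \<le> N * j" using Npos by (intro mult_right_mono) auto
    then show ?thesis by simp
  qed
  finally have "x = (f ^^ (N * j - j)) y" using funpow_mult_id[where f=f and N=N and x=x and q=j] Nid assms(1) by simp
  then have "orb f x \<subseteq> orb f y" unfolding orb_def by clarsimp (metis comp_apply funpow_add)
  with 1 show ?thesis by auto
qed

lemma ncycles_orb: "ncycles S f = card (orb f ` S)"
  unfolding ncycles_def orb_def by simp

lemma ncycles_sum: "real (ncycles S f) = (\<Sum>x\<in>S. 1 / real (per f x))"
proof -
  have "(\<Sum>x\<in>S. 1 / real (per f x)) = (\<Sum>B\<in>orb f ` S. \<Sum>x\<in>{x\<in>S. orb f x = B}. 1 / real (per f x))"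
    by (rule sum.image_gen[OF fin])
  also have "\<dots> = (\<Sum>B\<in>orb f ` S. 1)"
  proof (rule sum.cong[OF refl])
    fix B assume "B \<in> orb f ` S"
    then obtain y where y: "y \<in> S" "B = orb f y" by auto
    have eq: "{x\<in>S. orb f x = B} = B"
    proof
      show "{x\<in>S. orb f x = B} \<subseteq> B" using orb_self by auto
      show "B \<subseteq> {x\<in>S. orb f x = B}"
      proof
        fix x assume x: "x \<in> B"
        then have "x \<in> S" using orb_sub[OF y(1)] y(2) by auto
        moreover have "orb f x = B" using orb_same[OF y(1)] x y(2) by simp
        ultimately show "x \<in> {x\<in>S. orb f x = B}" by simp
      qed
    qed
    have "(\<Sum>x\<in>{x\<in>S. orb f x = B}. 1 / real (per f x)) = (\<Sum>x\<in>B. 1 / real (card B))"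
      unfolding eq
    proof (rule sum.cong[OF refl])
      fix x assume "x \<in> B"
      then have "x \<in> S" "orb f x = B" using orb_sub[OF y(1)] orb_same[OF y(1)] y(2) by auto
      then show "1 / real (per f x) = 1 / real (card B)" using card_orb by metis
    qed
    also have "\<dots> = 1" using card_orb[OF y(1)] per_basic[OF y(1)] y by simp
    finally show "(\<Sum>x\<in>{x\<in>S. orb f x = B}. 1 / real (per f x)) = 1" .
  qed
  also have "\<dots> = real (ncycles S f)" by (simp add: ncycles_orb)
  finally show ?thesis by simp
qed

lemma card_mult_lt: assumes "p > 0" "p dvd N" shows "card {k\<in>{..<N}. p dvd k} = N div p"
proof -
  have "{k\<in>{..<N}. p dvd k} = (\<lambda>i. p * i) ` {..<N div p}"
  proof
    show "{k\<in>{..<N}. p dvd k} \<subseteq> (\<lambda>i. p * i) ` {..<N div p}"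
      using assms by (auto elim!: dvdE)
    show "(\<lambda>i. p * i) ` {..<N div p} \<subseteq> {k\<in>{..<N}. p dvd k}"
      using assms by (auto elim!: dvdE)
  qed
  moreover have "inj_on (\<lambda>i. p * i) {..<N div p}" using assms by (auto simp: inj_on_def)
  ultimately show ?thesis by (simp add: card_image)
qed

lemma burnside: "real N * real (ncycles S f) = (\<Sum>k<N. real (card {x\<in>S. (f ^^ k) x = x}))"
proof -
  have "(\<Sum>k<N. real (card {x\<in>S. (f ^^ k) x = x})) = (\<Sum>k<N. \<Sum>x\<in>S. if (f ^^ k) x = x then 1 else 0)"
    using fin by (simp add: sum.If_cases Int_def)
  also have "\<dots> = (\<Sum>x\<in>S. \<Sum>k<N. if (f ^^ k) x = x then 1 else 0)" by (rule sum.swap)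
  also have "\<dots> = (\<Sum>x\<in>S. real N * (1 / real (per f x)))"
  proof (rule sum.cong[OF refl])
    fix x assume x: "x \<in> S"
    have "(\<Sum>k<N. if (f ^^ k) x = x then 1 else 0 :: real) = real (card {k\<in>{..<N}. per f x dvd k})"
      using per_dvd[OF x] by (simp add: sum.If_cases Int_def)
    also have "\<dots> = real (N div per f x)"
      using card_mult_lt per_basic[OF x] per_dvd[OF x] Nid[OF x] by simp
    also have "\<dots> = real N * (1 / real (per f x))"
      using per_basic[OF x] per_dvd[OF x] Nid[OF x] by (simp add: real_of_nat_div)
    finally show "(\<Sum>k<N. if (f ^^ k) x = x then 1 else 0 :: real) = real N * (1 / real (per f x))" .
  qed
  also have "\<dots> = real N * real (ncycles S f)" by (simp add: ncycles_sum sum_distrib_left)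
  finally show ?thesis by simp
qed

end



lemma sqf_coprime_div:
  fixes n d :: nat
  assumes "squarefree n" "d dvd n"
  shows "coprime d (n div d)"
proof -
  let ?g = "gcd d (n div d)"
  have "?g * ?g dvd d * (n div d)" by (intro mult_dvd_mono) auto
  also have "d * (n div d) = n" using assms by simp
  finally have "?g ^ 2 dvd n" by (simp add: power2_eq_square)
  then have "?g dvd 1" using squarefreeD[OF assms(1)] by blast
  then show ?thesis using is_unit_gcd by blast
qed

lemma mord_works:
  assumes "m > 0" "coprime r (int m)"
  shows "[r ^ k = 1] (mod int m) \<longleftrightarrow> mord m r dvd k" "mord m r > 0"
proof -
  define a where "a = nat (r mod int m)"
  have ra: "[r ^ k = int a ^ k] (mod int m)" for k
    unfolding a_def using assms by (simp add: cong_def power_mod)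
  have iff: "[r ^ k = 1] (mod int m) \<longleftrightarrow> [a ^ k = 1] (mod m)" for k
  proof -
    have "[r ^ k = 1] (mod int m) \<longleftrightarrow> [int a ^ k = 1] (mod int m)"
      using ra[of k] unfolding cong_def by simp
    also have "\<dots> \<longleftrightarrow> [int (a ^ k) = int 1] (mod int m)" by simp
    also have "\<dots> \<longleftrightarrow> [a ^ k = 1] (mod m)" by (rule cong_int_iff)
    finally show ?thesis .
  qed
  have cop: "coprime m a"
  proof -
    have "coprime (r mod int m) (int m)" using assms by simp
    then have "coprime (int a) (int m)" unfolding a_def using assms by simp
    then show ?thesis by (simp add: coprime_commute)
  qed
  have opos: "ord m a > 0" using cop ord_eq_0[of m a] by simp
  have "mord m r = (LEAST k. 0 < k \<and> ord m a dvd k)"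
    unfolding mord_def using iff ord_divides by simp
  also have "\<dots> = ord m a"
  proof (rule Least_equality)
    show "0 < ord m a \<and> ord m a dvd ord m a" using opos by simp
    show "\<And>y. 0 < y \<and> ord m a dvd y \<Longrightarrow> ord m a \<le> y" by (simp add: dvd_imp_le)
  qed
  finally have eq: "mord m r = ord m a" .
  show "[r ^ k = 1] (mod int m) \<longleftrightarrow> mord m r dvd k" using iff ord_divides eq by simp
  show "mord m r > 0" using eq opos by simp
qed

lemma Ssum_Suc: "Ssum (Suc k) x = 1 + x * Ssum k x"
  unfolding Ssum_def sum.lessThan_Suc_shift by (simp add: sum_distrib_left)

lemma Ssum_Suc2: "Ssum (Suc k) x = Ssum k x + x ^ k"
  unfolding Ssum_def by simp

lemma Ssum_add: "Ssum (a + b) x = Ssum a x + x ^ a * Ssum b x"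
proof (induction b)
  case 0
  then show ?case by (simp add: Ssum_def)
next
  case (Suc b)
  have "Ssum (a + Suc b) x = Ssum (a + b) x + x ^ (a + b)" by (simp add: Ssum_Suc2)
  also have "\<dots> = Ssum a x + x ^ a * (Ssum b x + x ^ b)" using Suc by (simp add: power_add algebra_simps)
  also have "\<dots> = Ssum a x + x ^ a * Ssum (Suc b) x" by (simp add: Ssum_Suc2)
  finally show ?case .
qed

lemma Ssum_geom: "(x - 1) * Ssum k x = x ^ k - 1"
  by (induction k) (simp_all add: Ssum_Suc algebra_simps Ssum_def)

lemma Ssum_mult_cong:
  assumes "[r ^ p = 1] (mod M)"
  shows "[Ssum (p * q) r = int q * Ssum p r] (mod M)"
proof (induction q)
  case 0
  then show ?case by (simp add: Ssum_def)
next
  case (Suc q)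
  have "Ssum (p * Suc q) r = Ssum (p * q) r + r ^ (p * q) * Ssum p r"
    by (simp add: Ssum_add[symmetric] add.commute)
  moreover have "[r ^ (p * q) = 1] (mod M)"
    using cong_pow[OF assms, of q] by (simp add: power_mult)
  ultimately have "[Ssum (p * Suc q) r = int q * Ssum p r + 1 * Ssum p r] (mod M)"
    using Suc by (metis cong_add cong_mult cong_refl)
  then show ?case by (simp add: algebra_simps)
qed

lemma dvd_mult_gcd_iff:
  "(m::int) \<noteq> 0 \<Longrightarrow> m dvd q * c \<longleftrightarrow> (m div gcd m c) dvd q"
  by (smt (verit, best) div_dvd_iff_mult dvd_div_mult_self dvd_productE
    dvd_triv_right gcd_dvd1 gcd_dvd2 gcd_eq_0_iff gcd_greatest mult_dvd_mono)

lemma kappa_works: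
  assumes "m > 0" "coprime r (int m)"
  shows "(int m dvd r ^ k - 1 \<and> int m dvd t * Ssum k r) \<longleftrightarrow> kappa m r t dvd k"
    and "kappa m r t > 0"
proof -
  define p where "p = mord m r"
  define G where "G = gcd (int m) (t * Ssum p r)"
  define m' where "m' = int m div G"
  have ppos: "p > 0" using mord_works[OF assms] p_def by simp
  have Gpos: "G > 0" using assms unfolding G_def by simp
  have Gdvd: "G dvd int m" unfolding G_def by simp
  have m'pos: "m' > 0"
  proof -
    have "int m = G * m'" unfolding m'_def using Gdvd by simp
    moreover have "int m > 0" using assms by simp
    ultimately show ?thesis using Gpos zero_less_mult_pos by metis
  qed
  have kap: "kappa m r t = p * nat m'"
  proof -
    have "int m * int p div G = int p * m'" unfolding m'_def using Gdvd
      by (metis dvd_div_mult mult.commute)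
    then show ?thesis unfolding kappa_def p_def[symmetric] G_def[symmetric]
      using m'pos by (simp add: nat_mult_distrib)
  qed
  show "kappa m r t > 0" using kap ppos m'pos by simp
  have key: "int m dvd t * Ssum (p * q) r \<longleftrightarrow> m' dvd int q" for q
  proof -
    have "[r ^ p = 1] (mod int m)" using mord_works[OF assms] p_def by simp
    then have "[t * Ssum (p * q) r = int q * (t * Ssum p r)] (mod int m)"
      using Ssum_mult_cong cong_scalar_left by (metis mult.left_commute)
    then have "int m dvd t * Ssum (p * q) r \<longleftrightarrow> int m dvd int q * (t * Ssum p r)"
      using cong_dvd_iff by blast
    also have "\<dots> \<longleftrightarrow> m' dvd int q" unfolding m'_def G_def using assms dvd_mult_gcd_iff by simp
    finally show ?thesis .
  qed
  have e1: "int m dvd r ^ k - 1 \<longleftrightarrow> p dvd k"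
    using mord_works[OF assms] p_def by (simp add: cong_iff_dvd_diff cong_sym_eq)
  show "(int m dvd r ^ k - 1 \<and> int m dvd t * Ssum k r) \<longleftrightarrow> kappa m r t dvd k"
  proof
    assume h: "int m dvd r ^ k - 1 \<and> int m dvd t * Ssum k r"
    then obtain q where q: "k = p * q" using e1 by (auto elim: dvdE)
    then have "m' dvd int q" using key h by simp
    then have "nat m' dvd q" using m'pos by (metis int_dvd_int_iff int_nat_eq order_less_imp_le not_le)
    then show "kappa m r t dvd k" using kap q by simp
  next
    assume h: "kappa m r t dvd k"
    then obtain q where q: "k = p * q" using kap by (metis dvd_mult_left dvdE)
    from h have "p * nat m' dvd p * q" using kap q by simp
    then have "nat m' dvd q" using ppos by simp
    then have "m' dvd int q" using m'pos by (metis int_dvd_int_iff int_nat_eq order_less_imp_le not_le)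
    then show "int m dvd r ^ k - 1 \<and> int m dvd t * Ssum k r" using key e1 q by simp
  qed
qed



lemma count_cong:
  fixes q D z :: int
  assumes "q > 0" "D \<ge> 0"
  shows "card {j\<in>{0..<D*q}. q dvd j + z} = nat D"
proof -
  have "{j\<in>{0..<D*q}. q dvd j + z} = (\<lambda>i. (-z) mod q + q * i) ` {0..<D}"
  proof
    show "{j\<in>{0..<D*q}. q dvd j + z} \<subseteq> (\<lambda>i. (-z) mod q + q * i) ` {0..<D}"
    proof
      fix j assume j: "j \<in> {j\<in>{0..<D*q}. q dvd j + z}"
      have jm: "j mod q = (-z) mod q" unfolding mod_eq_dvd_iff using j by simp
      have j1: "0 \<le> j" "j < D * q" using j by auto
      have "j div q < D" using j1 assms
        by (smt (verit, best) mod_div_mult_eq mult_right_less_imp_less pos_mod_sign)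
      moreover have "0 \<le> j div q" using j1 assms by (simp add: pos_imp_zdiv_nonneg_iff)
      ultimately have "j div q \<in> {0..<D}" by simp
      moreover note jm
      ultimately show "j \<in> (\<lambda>i. (-z) mod q + q * i) ` {0..<D}"
        by (metis image_eqI mod_mult_div_eq mult.commute)
    qed
    show "(\<lambda>i. (-z) mod q + q * i) ` {0..<D} \<subseteq> {j\<in>{0..<D*q}. q dvd j + z}"
    proof
      fix j assume "j \<in> (\<lambda>i. (-z) mod q + q * i) ` {0..<D}"
      then obtain i where i: "i \<in> {0..<D}" "j = (-z) mod q + q * i" by auto
      have "q * i \<le> q * (D - 1)" using i assms by (intro mult_left_mono) auto
      then have qi: "q * i + q \<le> D * q" by (simp add: algebra_simps)
      have m1: "(-z) mod q < q" "(-z) mod q \<ge> 0" using assms by auto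
      have "0 \<le> q * i" using i assms by simp
      then have "j < D * q" "0 \<le> j" using i(2) qi m1 by linarith+
      moreover have "q dvd j + z" unfolding i(2)
        by (metis (no_types, lifting) add.commute add.left_commute add_diff_cancel_right' diff_minus_eq_add
            dvd_add_right_iff dvd_triv_left mod_eq_dvd_iff mod_mod_trivial)
      ultimately show "j \<in> {j\<in>{0..<D*q}. q dvd j + z}" by auto
    qed
  qed
  moreover have "inj_on (\<lambda>i. (-z) mod q + q * i) {0..<D}" using assms by (auto simp: inj_on_def)
  ultimately show ?thesis by (simp add: card_image)
qed

lemma lin_count:
  fixes a c :: int and n :: nat
  assumes "n > 0"
  shows "card {j\<in>{0..<int n}. int n dvd a * j + c} =
           (if gcd a (int n) dvd c then nat (gcd a (int n)) else 0)"
proof -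
  define N where "N = int n"
  define D where "D = gcd a N"
  have Npos: "N > 0" using assms N_def by simp
  have Dpos: "D > 0" using Npos D_def by simp
  define q where "q = N div D"
  have Nq: "N = D * q" unfolding q_def D_def by simp
  have qpos: "q > 0" using Nq Npos Dpos zero_less_mult_pos by blast
  show ?thesis
  proof (cases "D dvd c")
    case False
    have "{j\<in>{0..<N}. N dvd a * j + c} = {}"
    proof (rule ccontr)
      assume "{j\<in>{0..<N}. N dvd a * j + c} \<noteq> {}"
      then obtain j where "N dvd a * j + c" by auto
      then have "D dvd a * j + c" unfolding D_def by (meson dvd_trans gcd_dvd2)
      then have "D dvd c" unfolding D_def by (simp add: dvd_add_right_iff)
      then show False using False by simp
    qed
    then have "{j\<in>{0..<int n}. int n dvd a * j + c} = {}" unfolding N_def .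
    then show ?thesis using False unfolding N_def D_def by (simp only: card.empty if_False)
  next
    case True
    obtain a' where a': "a = D * a'" unfolding D_def by (meson gcd_dvd1 dvdE)
    obtain c' where c': "c = D * c'" using True by (auto elim: dvdE)
    obtain u v where uv: "u * a + v * N = D" unfolding D_def using bezout_int by blast
    have uv': "u * a' + v * q = 1"
    proof -
      have "D * (u * a' + v * q) = D * 1" using uv a' Nq by (simp add: algebra_simps)
      then show ?thesis using Dpos by simp
    qed
    have iff: "N dvd a * j + c \<longleftrightarrow> q dvd j + u * c'" for j
    proof -
      have "N dvd a * j + c \<longleftrightarrow> D * q dvd D * (a' * j + c')" using Nq a' c' by (simp add: algebra_simps)
      also have "\<dots> \<longleftrightarrow> q dvd a' * j + c'" using Dpos by simp
      also have "\<dots> \<longleftrightarrow> q dvd j + u * c'"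
      proof
        assume h: "q dvd a' * j + c'"
        have "j + u * c' = u * (a' * j + c') + q * (v * j)"
        proof -
          have "j = (u * a' + v * q) * j" using uv' by simp
          then show ?thesis by (simp add: algebra_simps)
        qed
        moreover have "q dvd u * (a' * j + c') + q * (v * j)" using h by simp
        ultimately show "q dvd j + u * c'" by simp
      next
        assume h: "q dvd j + u * c'"
        have "a' * j + c' = a' * (j + u * c') + q * (v * c')"
        proof -
          have "c' = (u * a' + v * q) * c'" using uv' by simp
          then show ?thesis by (simp add: algebra_simps)
        qed
        moreover have "q dvd a' * (j + u * c') + q * (v * c')" using h by simp
        ultimately show "q dvd a' * j + c'" by simp
      qed
      finally show ?thesis .
    qed
    have "card {j\<in>{0..<N}. N dvd a * j + c} = card {j\<in>{0..<D*q}. q dvd j + u * c'}"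
      using iff Nq by simp
    also have "\<dots> = nat D" using count_cong qpos Dpos by simp
    finally show ?thesis using True unfolding N_def D_def by simp
  qed
qed



lemma iterV:
  assumes "n > 0" "0 \<le> i" "i < int n"
  shows "(aut n r t ^^ k) (i, True) = ((r ^ k * i + t * Ssum k r) mod int n, True)"
proof (induction k)
  case 0
  then show ?case using assms by (simp add: Ssum_def)
next
  case (Suc k)
  have "(aut n r t ^^ Suc k) (i, True) = aut n r t ((r ^ k * i + t * Ssum k r) mod int n, True)"
    using Suc by simp
  also have "\<dots> = ((r * ((r ^ k * i + t * Ssum k r) mod int n) + t) mod int n, True)"
    by (simp add: aut_def)
  also have "(r * ((r ^ k * i + t * Ssum k r) mod int n) + t) mod int n
      = (r * (r ^ k * i + t * Ssum k r) + t) mod int n"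
    by (metis mod_add_left_eq mod_mult_right_eq)
  also have "r * (r ^ k * i + t * Ssum k r) + t = r ^ Suc k * i + t * Ssum (Suc k) r"
    by (simp add: Ssum_Suc algebra_simps)
  finally show ?case .
qed

lemma iterU:
  assumes "n > 0" "0 \<le> i" "i < int n"
  shows "(aut n r 0 ^^ k) (i, False) = ((r ^ k * i) mod int n, False)"
proof (induction k)
  case 0
  then show ?case using assms by simp
next
  case (Suc k)
  then show ?case by (simp add: aut_def mod_mult_right_eq mult.assoc)
qed

lemma V_img: "V_set n = (\<lambda>j. (j, True)) ` {0..<int n}"
  unfolding V_set_def by auto

lemma U_img: "U_set n = (\<lambda>j. (int j, False)) ` {1..<n}"
proof
  show "U_set n \<subseteq> (\<lambda>j. (int j, False)) ` {1..<n}"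
  proof
    fix x assume "x \<in> U_set n"
    then obtain i where i: "x = (i, False)" "1 \<le> i" "i < int n" unfolding U_set_def by auto
    then have "nat i \<in> {1..<n}" "i = int (nat i)" by auto
    then show "x \<in> (\<lambda>j. (int j, False)) ` {1..<n}" using i by (metis image_eqI)
  qed
  show "(\<lambda>j. (int j, False)) ` {1..<n} \<subseteq> U_set n" unfolding U_set_def by auto
qed



lemma gcd_eq_via_divs:
  fixes X Y :: int and n :: nat
  assumes "n > 0" "\<And>D::nat. D dvd n \<Longrightarrow> D > 0 \<Longrightarrow> (int D dvd X \<longleftrightarrow> int D dvd Y)"
  shows "gcd X (int n) = gcd Y (int n)"
proof -
  have one: "gcd A (int n) dvd gcd B (int n)"
    if h: "\<And>D::nat. D dvd n \<Longrightarrow> D > 0 \<Longrightarrow> int D dvd A \<Longrightarrow> int D dvd B" for A B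
  proof -
    define G where "G = nat (gcd A (int n))"
    have Gi: "int G = gcd A (int n)" unfolding G_def by simp
    have "G dvd n" using Gi by (metis gcd_dvd2 int_dvd_int_iff)
    moreover have "G > 0" using Gi assms(1) by (metis gcd_eq_0_iff gr0I of_nat_0 of_nat_0_less_iff not_gr0)
    moreover have "int G dvd A" using Gi by simp
    ultimately have "int G dvd B" using h by blast
    then show ?thesis using Gi by (metis gcd_dvd2 gcd_greatest)
  qed
  have "gcd X (int n) dvd gcd Y (int n)" using one assms(2) by blast
  moreover have "gcd Y (int n) dvd gcd X (int n)" using one assms(2) by blast
  ultimately show ?thesis by (simp add: zdvd_antisym_nonneg)
qed

lemma mord_dvd_sub:
  assumes "n > 0" "coprime r (int n)" "D dvd n" "D > 0"
  shows "mord D r dvd mord n r" "coprime r (int D)"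
proof -
  show cD: "coprime r (int D)" using assms by (meson coprime_divisors dvd_refl int_dvd_int_iff)
  have "[r ^ mord n r = 1] (mod int n)" using mord_works[OF assms(1,2)] by simp
  then have "[r ^ mord n r = 1] (mod int D)" using assms(3) cong_dvd_modulus by (metis int_dvd_int_iff)
  then show "mord D r dvd mord n r" using mord_works[OF assms(4) cD] by simp
qed

lemma gcd_reduce:
  assumes "n > 0" "coprime r (int n)" "c > 0"
  shows "gcd (r ^ (c * m) - 1) (int n) = gcd (r ^ (c * gcd m (mord n r div gcd c (mord n r))) - 1) (int n)"
proof (rule gcd_eq_via_divs[OF assms(1)])
  fix D :: nat assume D: "D dvd n" "D > 0"
  define o' where "o' = mord n r"
  define e where "e = o' div gcd c o'"
  have cD: "coprime r (int D)" and mo: "mord D r dvd o'" using mord_dvd_sub[OF assms(1,2) D(1,2)] o'_def by auto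
  have iff: "int D dvd r ^ x - 1 \<longleftrightarrow> mord D r dvd x" for x
    using mord_works(1)[OF D(2) cD] by (simp add: cong_iff_dvd_diff cong_sym_eq)
  have lc: "lcm c o' = c * e" unfolding e_def
    by (simp add: lcm_nat_def div_mult_swap)
  have ml: "mord D r dvd c * e" using mo lc by (metis dvd_lcm2 dvd_trans)
  have "mord D r dvd c * m \<longleftrightarrow> mord D r dvd gcd (c * m) (c * e)" using ml by simp
  also have "gcd (c * m) (c * e) = c * gcd m e" by (simp add: gcd_mult_distrib_nat)
  finally show "int D dvd r ^ (c * m) - 1 \<longleftrightarrow> int D dvd r ^ (c * gcd m (mord n r div gcd c (mord n r))) - 1"
    using iff e_def o'_def by simp
qed



lemma r1_dvd: "(r - 1) dvd (r ^ x - (1::int))"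
  using Ssum_geom[of r x] by (metis dvd_triv_left)

lemma K_eq:
  assumes n: "n > 0" and sq: "squarefree n" and cop: "coprime r (int n)"
    and d: "d dvd n" "d > 0" and l: "gcd (r ^ (l * kappa d r t) - 1) (int n) = int d"
  shows "kappa n r t = kappa d r t * (mord n r div gcd (kappa d r t) (mord n r))"
proof -
  define c where "c = kappa d r t"
  define o' where "o' = mord n r"
  define L where "L = c * (o' div gcd c o')"
  define K where "K = kappa n r t"
  have cD: "coprime r (int d)" using mord_dvd_sub[OF n cop d(1,2)] by simp
  have dn: "int d dvd int n" using d by simp
  have kn: "(int n dvd r ^ k - 1 \<and> int n dvd t * Ssum k r) \<longleftrightarrow> K dvd k" for k
    using kappa_works(1)[OF n cop] K_def by simp
  have kd: "(int d dvd r ^ k - 1 \<and> int d dvd t * Ssum k r) \<longleftrightarrow> c dvd k" for k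
    using kappa_works(1)[OF d(2) cD] c_def by simp
  have mn: "int n dvd r ^ k - 1 \<longleftrightarrow> o' dvd k" for k
    using mord_works(1)[OF n cop] o'_def by (simp add: cong_iff_dvd_diff cong_sym_eq)
  have Llcm: "L = lcm c o'" unfolding L_def by (simp add: lcm_nat_def div_mult_swap)
  have hK: "int n dvd r ^ K - 1" "int n dvd t * Ssum K r" using kn[of K] by auto
  have "c dvd K" using kd[of K] hK dn by (meson dvd_trans)
  moreover have "o' dvd K" using mn hK by simp
  ultimately have LK: "L dvd K" unfolding Llcm by (rule lcm_least)
  have oL: "o' dvd L" unfolding Llcm by simp
  have cL: "c dvd L" unfolding Llcm by simp
  have nL: "int n dvd r ^ L - 1" using mn oL by simp
  have dL: "int d dvd t * Ssum L r" using kd[of L] cL by simp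
  define d' where "d' = n div d"
  have ndd: "n = d * d'" unfolding d'_def using d by simp
  have cop_dd: "coprime (int d) (int d')" using sqf_coprime_div[OF sq d(1)] d'_def by simp
  have d'n: "int d' dvd int n" using ndd by simp
  have cop2: "coprime (int d') (r - 1)"
  proof -
    define g where "g = gcd (int d') (r - 1)"
    have "g dvd r - 1" unfolding g_def by simp
    then have "g dvd r ^ (l * kappa d r t) - 1" using r1_dvd dvd_trans by blast
    moreover have "g dvd int n" unfolding g_def using d'n by (meson dvd_trans gcd_dvd1)
    ultimately have "g dvd int d" using l by (metis gcd_greatest)
    moreover have "g dvd int d'" unfolding g_def by simp
    ultimately have "is_unit g" using cop_dd by (meson coprime_common_divisor)
    then show ?thesis unfolding g_def using is_unit_gcd by blast
  qed
  have "int d' dvd (r - 1) * Ssum L r" using Ssum_geom[of r L] nL d'n by (metis dvd_trans)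
  then have "int d' dvd Ssum L r" using cop2 coprime_dvd_mult_right_iff by blast
  then have d'L: "int d' dvd t * Ssum L r" by simp
  have "int d * int d' dvd t * Ssum L r" using divides_mult[OF dL d'L cop_dd] .
  then have "int n dvd t * Ssum L r" using ndd by simp
  then have "K dvd L" using kn nL by blast
  then have "K = L" using LK by (simp add: dvd_antisym)
  then show ?thesis unfolding K_def L_def c_def o'_def .
qed

lemma card_lt_gcd:
  assumes "e > 0" "l dvd e"
  shows "card {m\<in>{..<e}. gcd m e = l} = totient (e div l)"
proof (cases "l = e")
  case True
  have "{m\<in>{..<e}. gcd m e = l} = {0}"
  proof
    show "{m\<in>{..<e}. gcd m e = l} \<subseteq> {0}"
    proof
      fix m assume m: "m \<in> {m\<in>{..<e}. gcd m e = l}"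
      then have "e dvd m" "m < e" using True by (auto simp: gcd_nat.absorb_iff2[symmetric])
      then show "m \<in> {0}" by (metis dvd_imp_le neq0_conv not_le singleton_iff)
    qed
    show "{0} \<subseteq> {m\<in>{..<e}. gcd m e = l}" using True assms by simp
  qed
  then show ?thesis using True assms by simp
next
  case False
  have "{m\<in>{..<e}. gcd m e = l} = {k\<in>{0<..e}. gcd k e = l}"
    using False assms by (auto simp: order.order_iff_strict intro!: Nat.gr0I)
  then show ?thesis using card_gcd_eq_totient assms by simp
qed



lemma count_d:
  assumes n: "n > 0" and sq: "squarefree n" and cop: "coprime r (int n)"
    and d: "d dvd n" "d > 0"
  shows "card {k\<in>{..<kappa n r t}. gcd (r ^ k - 1) (int n) = int d \<and> kappa d r t dvd k}
    = (\<Sum>l\<in>{l. 0 < l \<and> l dvd (mord n r div gcd (kappa d r t) (mord n r))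
              \<and> gcd (r ^ (l * kappa d r t) - 1) (int n) = int d}.
         totient ((mord n r div gcd (kappa d r t) (mord n r)) div l))"
proof -
  define c where "c = kappa d r t"
  define o' where "o' = mord n r"
  define e where "e = o' div gcd c o'"
  define K where "K = kappa n r t"
  define Ld where "Ld = {l. 0 < l \<and> l dvd e \<and> gcd (r ^ (l * c) - 1) (int n) = int d}"
  define A where "A = {k\<in>{..<K}. gcd (r ^ k - 1) (int n) = int d \<and> c dvd k}"
  have cD: "coprime r (int d)" using mord_dvd_sub[OF n cop d(1,2)] by simp
  have cpos: "c > 0" using kappa_works(2)[OF d(2) cD] c_def by simp
  have opos: "o' > 0" using mord_works(2)[OF n cop] o'_def by simp
  have epos: "e > 0" unfolding e_def using opos
    by (metis dvd_div_eq_0_iff gcd_dvd2 gcd_eq_0_iff neq0_conv)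
  have gr: "gcd (r ^ (c * m) - 1) (int n) = gcd (r ^ (c * gcd m e) - 1) (int n)" for m
    using gcd_reduce[OF n cop cpos] e_def o'_def by simp
  have finL: "finite Ld"
  proof (rule finite_subset)
    show "Ld \<subseteq> {l. l dvd e}" unfolding Ld_def by auto
    show "finite {l. l dvd e}" using epos by simp
  qed
  have main: "card A = (\<Sum>l\<in>Ld. totient (e div l))"
  proof (cases "Ld = {}")
    case True
    have "A = {}"
    proof (rule ccontr)
      assume "A \<noteq> {}"
      then obtain k where k: "k \<in> A" by auto
      then obtain m where m: "k = c * m" unfolding A_def by (auto elim: dvdE)
      define l where "l = gcd m e"
      have "0 < l" using epos l_def by simp
      moreover have "l dvd e" using l_def by simp
      moreover have "gcd (r ^ (l * c) - 1) (int n) = int d"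
        using k gr[of m] m l_def unfolding A_def by (simp add: mult.commute)
      ultimately have "l \<in> Ld" unfolding Ld_def by simp
      then show False using True by simp
    qed
    then show ?thesis using True by simp
  next
    case False
    then obtain l0 where l0: "l0 \<in> Ld" by auto
    then have "gcd (r ^ (l0 * c) - 1) (int n) = int d" unfolding Ld_def by simp
    then have Keq: "K = c * e" using K_eq[OF n sq cop d] unfolding K_def c_def e_def o'_def by simp
    define B where "B = {m\<in>{..<e}. gcd (r ^ (c * m) - 1) (int n) = int d}"
    have AB: "A = (\<lambda>m. c * m) ` B"
    proof
      show "A \<subseteq> (\<lambda>m. c * m) ` B"
      proof
        fix k assume k: "k \<in> A"
        then obtain m where m: "k = c * m" unfolding A_def by (auto elim: dvdE)
        have "m < e" using k m Keq cpos unfolding A_def by simp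
        then have "m \<in> B" using k m unfolding A_def B_def by simp
        then show "k \<in> (\<lambda>m. c * m) ` B" using m by blast
      qed
      show "(\<lambda>m. c * m) ` B \<subseteq> A" unfolding A_def B_def using Keq cpos by auto
    qed
    have "card A = card B" unfolding AB using cpos by (intro card_image) (auto simp: inj_on_def)
    also have "B = (\<Union>l\<in>Ld. {m\<in>{..<e}. gcd m e = l})"
    proof
      show "B \<subseteq> (\<Union>l\<in>Ld. {m\<in>{..<e}. gcd m e = l})"
      proof
        fix m assume m: "m \<in> B"
        have "gcd m e \<in> Ld" using m gr[of m] epos unfolding B_def Ld_def by (simp add: mult.commute)
        then show "m \<in> (\<Union>l\<in>Ld. {m\<in>{..<e}. gcd m e = l})" using m unfolding B_def by auto
      qed
      show "(\<Union>l\<in>Ld. {m\<in>{..<e}. gcd m e = l}) \<subseteq> B"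
      proof
        fix m assume "m \<in> (\<Union>l\<in>Ld. {m\<in>{..<e}. gcd m e = l})"
        then obtain l where l: "l \<in> Ld" "m < e" "gcd m e = l" by auto
        have "gcd (r ^ (c * m) - 1) (int n) = int d" using gr[of m] l unfolding Ld_def by (simp add: mult.commute)
        then show "m \<in> B" using l unfolding B_def by simp
      qed
    qed
    also have "card (\<Union>l\<in>Ld. {m\<in>{..<e}. gcd m e = l}) = (\<Sum>l\<in>Ld. card {m\<in>{..<e}. gcd m e = l})"
      using finL by (intro card_UN_disjoint) auto
    also have "\<dots> = (\<Sum>l\<in>Ld. totient (e div l))"
      using card_lt_gcd epos unfolding Ld_def by (intro sum.cong) auto
    finally show ?thesis .
  qed
  then show ?thesis unfolding A_def Ld_def c_def e_def o'_def K_def .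
qed



lemma fix_count:
  assumes n: "n > 0" and cop: "coprime r (int n)"
  shows "card {x\<in>V_set n. (aut n r t ^^ k) x = x} =
     (\<Sum>d\<in>{d. 0 < d \<and> d dvd n}. if gcd (r ^ k - 1) (int n) = int d \<and> kappa d r t dvd k then d else 0)"
proof -
  define G where "G = gcd (r ^ k - 1) (int n)"
  define g where "g = nat G"
  have Gi: "int g = G" unfolding g_def G_def by simp
  have gpos: "g > 0" using Gi n unfolding G_def by (metis gcd_eq_0_iff gr0I of_nat_0 of_nat_0_eq_iff)
  have gdvd: "g dvd n" using Gi unfolding G_def by (metis gcd_dvd2 int_dvd_int_iff)
  have cg: "coprime r (int g)" using mord_dvd_sub[OF n cop gdvd gpos] by simp
  have "{x\<in>V_set n. (aut n r t ^^ k) x = x} =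
      (\<lambda>j. (j, True)) ` {j\<in>{0..<int n}. int n dvd (r ^ k - 1) * j + t * Ssum k r}"
  proof -
    have eq: "(aut n r t ^^ k) (j, True) = (j, True) \<longleftrightarrow> int n dvd (r ^ k - 1) * j + t * Ssum k r"
      if j: "j \<in> {0..<int n}" for j
    proof -
      have "(aut n r t ^^ k) (j, True) = (j, True) \<longleftrightarrow> (r ^ k * j + t * Ssum k r) mod int n = j mod int n"
        using iterV[where n=n and i=j and r=r and t=t and k=k] n j by simp
      also have "\<dots> \<longleftrightarrow> int n dvd (r ^ k * j + t * Ssum k r) - j" by (rule mod_eq_dvd_iff)
      also have "(r ^ k * j + t * Ssum k r) - j = (r ^ k - 1) * j + t * Ssum k r" by (simp add: algebra_simps)
      finally show ?thesis .
    qed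
    show ?thesis unfolding V_img using eq by auto
  qed
  then have "card {x\<in>V_set n. (aut n r t ^^ k) x = x} =
      card {j\<in>{0..<int n}. int n dvd (r ^ k - 1) * j + t * Ssum k r}"
    by (simp add: card_image inj_on_def)
  also have "\<dots> = (if G dvd t * Ssum k r then g else 0)"
    using lin_count[OF n] unfolding G_def g_def by simp
  also have "\<dots> = (if kappa g r t dvd k then g else 0)"
    using kappa_works(1)[OF gpos cg, of k t] Gi unfolding G_def by simp
  also have "\<dots> = (\<Sum>d\<in>{d. 0 < d \<and> d dvd n}. if d = g then (if kappa d r t dvd k then d else 0) else 0)"
    using gpos gdvd n by (simp add: sum.delta)
  also have "\<dots> = (\<Sum>d\<in>{d. 0 < d \<and> d dvd n}. if gcd (r ^ k - 1) (int n) = int d \<and> kappa d r t dvd k then d else 0)"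
  proof (rule sum.cong[OF refl])
    fix d :: nat
    have "(gcd (r ^ k - 1) (int n) = int d) \<longleftrightarrow> d = g" using Gi G_def by auto
    then show "(if d = g then (if kappa d r t dvd k then d else 0) else 0) =
      (if gcd (r ^ k - 1) (int n) = int d \<and> kappa d r t dvd k then d else 0)" by auto
  qed
  finally show ?thesis .
qed



lemma V_permN:
  assumes n: "n > 0" and cop: "coprime r (int n)"
  shows "permN (V_set n) (aut n r t) (kappa n r t)"
proof
  show "finite (V_set n)" unfolding V_img by simp
  show "aut n r t x \<in> V_set n" if "x \<in> V_set n" for x
    using that n unfolding V_set_def aut_def by auto
  show "0 < kappa n r t" using kappa_works(2)[OF n cop] .
  show "(aut n r t ^^ kappa n r t) x = x" if x: "x \<in> V_set n" for x
  proof -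
    obtain j where j: "x = (j, True)" "0 \<le> j" "j < int n" using x unfolding V_set_def by auto
    define K where "K = kappa n r t"
    have h: "int n dvd r ^ K - 1" "int n dvd t * Ssum K r" using kappa_works(1)[OF n cop, of K t] K_def by auto
    have "(r ^ K * j + t * Ssum K r) mod int n = j mod int n"
      unfolding mod_eq_dvd_iff
    proof -
      have "r ^ K * j + t * Ssum K r - j = (r ^ K - 1) * j + t * Ssum K r" by (simp add: algebra_simps)
      moreover have "int n dvd (r ^ K - 1) * j + t * Ssum K r" using h by simp
      ultimately show "int n dvd r ^ K * j + t * Ssum K r - j" by metis
    qed
    then show ?thesis using iterV[where n=n and i=j and r=r and t=t and k=K] n j K_def by simp
  qed
qed

theorem V_formula:
  assumes n: "n > 0" and sq: "squarefree n" and cop: "coprime r (int n)"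
  shows "real (ncycles (V_set n) (aut n r t))
           = (\<Sum>(d, l) \<in> {(d, l). 0 < d \<and> 0 < l \<and> d dvd n
                  \<and> l dvd (mord n r div gcd (kappa d r t) (mord n r))
                  \<and> gcd (r ^ (l * kappa d r t) - 1) (int n) = int d}.
                real d / real (kappa n r t)
                * real (totient (mord n r div (l * gcd (kappa d r t) (mord n r)))))"
proof -
  define K where "K = kappa n r t"
  define Dv where "Dv = {d. 0 < d \<and> d dvd n}"
  define e where "e = (\<lambda>d. mord n r div gcd (kappa d r t) (mord n r))"
  define Ld where "Ld = (\<lambda>d. {l. 0 < l \<and> l dvd e d \<and> gcd (r ^ (l * kappa d r t) - 1) (int n) = int d})"
  interpret P: permN "V_set n" "aut n r t" K using V_permN[OF n cop] K_def by simp
  have Kpos: "K > 0" using kappa_works(2)[OF n cop] K_def by simp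
  have finDv: "finite Dv" unfolding Dv_def using n by simp
  have finL: "finite (Ld d)" if "d \<in> Dv" for d
  proof (rule finite_subset)
    have "mord n r > 0" using mord_works(2)[OF n cop] by simp
    then have "e d > 0" unfolding e_def
      by (metis dvd_div_eq_0_iff gcd_dvd2 gcd_eq_0_iff neq0_conv)
    then show "finite {l. l dvd e d}" by simp
    show "Ld d \<subseteq> {l. l dvd e d}" unfolding Ld_def by auto
  qed
  have "real K * real (ncycles (V_set n) (aut n r t)) =
      (\<Sum>k<K. real (card {x\<in>V_set n. (aut n r t ^^ k) x = x}))"
    by (rule P.burnside)
  also have "\<dots> = (\<Sum>k<K. \<Sum>d\<in>Dv. if gcd (r ^ k - 1) (int n) = int d \<and> kappa d r t dvd k then real d else 0)"
    unfolding fix_count[OF n cop] Dv_def of_nat_sum by (intro sum.cong refl) simp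
  also have "\<dots> = (\<Sum>d\<in>Dv. \<Sum>k<K. if gcd (r ^ k - 1) (int n) = int d \<and> kappa d r t dvd k then real d else 0)"
    by (rule sum.swap)
  also have "\<dots> = (\<Sum>d\<in>Dv. real d * real (card {k\<in>{..<K}. gcd (r ^ k - 1) (int n) = int d \<and> kappa d r t dvd k}))"
    by (simp add: sum.If_cases Int_def mult.commute)
  also have "\<dots> = (\<Sum>d\<in>Dv. real d * (\<Sum>l\<in>Ld d. real (totient (e d div l))))"
  proof (rule sum.cong[OF refl])
    fix d assume d: "d \<in> Dv"
    show "real d * real (card {k\<in>{..<K}. gcd (r ^ k - 1) (int n) = int d \<and> kappa d r t dvd k}) =
        real d * (\<Sum>l\<in>Ld d. real (totient (e d div l)))"
      using count_d[OF n sq cop, of d t] d unfolding Dv_def Ld_def e_def K_def by simp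
  qed
  also have "\<dots> = (\<Sum>d\<in>Dv. \<Sum>l\<in>Ld d. real K * (real d / real K * real (totient (mord n r div (l * gcd (kappa d r t) (mord n r))))))"
  proof (rule sum.cong[OF refl])
    fix d assume d: "d \<in> Dv"
    have ediv: "mord n r div (l * gcd (kappa d r t) (mord n r)) = e d div l" for l
      unfolding e_def by (metis div_mult2_eq mult.commute)
    show "real d * (\<Sum>l\<in>Ld d. real (totient (e d div l))) =
      (\<Sum>l\<in>Ld d. real K * (real d / real K * real (totient (mord n r div (l * gcd (kappa d r t) (mord n r))))))"
      unfolding sum_distrib_left using Kpos
      by (intro sum.cong refl) (simp only: ediv, simp)
  qed
  also have "\<dots> = real K * (\<Sum>d\<in>Dv. \<Sum>l\<in>Ld d. real d / real K * real (totient (mord n r div (l * gcd (kappa d r t) (mord n r)))))"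
    by (simp add: sum_distrib_left)
  also have "(\<Sum>d\<in>Dv. \<Sum>l\<in>Ld d. real d / real K * real (totient (mord n r div (l * gcd (kappa d r t) (mord n r)))))
      = (\<Sum>(d, l) \<in> Sigma Dv Ld. real d / real K * real (totient (mord n r div (l * gcd (kappa d r t) (mord n r)))))"
    using finDv finL by (subst sum.Sigma) auto
  also have "Sigma Dv Ld = {(d, l). 0 < d \<and> 0 < l \<and> d dvd n
                  \<and> l dvd (mord n r div gcd (kappa d r t) (mord n r))
                  \<and> gcd (r ^ (l * kappa d r t) - 1) (int n) = int d}"
    unfolding Dv_def Ld_def e_def by auto
  finally show ?thesis using Kpos unfolding K_def by simp
qed



lemma U_permN:
  assumes n: "n > 0" and cop: "coprime r (int n)"
  shows "permN (U_set n) (aut n r 0) (mord n r)"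
proof
  show "finite (U_set n)" unfolding U_img by simp
  show "aut n r 0 x \<in> U_set n" if x: "x \<in> U_set n" for x
  proof -
    obtain i where i: "x = (i, False)" "1 \<le> i" "i < int n" using x unfolding U_set_def by auto
    have "(r * i) mod int n \<noteq> 0"
    proof
      assume "(r * i) mod int n = 0"
      then have "int n dvd r * i" by auto
      then have "int n dvd i" using cop by (metis coprime_commute coprime_dvd_mult_right_iff)
      then show False using i by (meson zdvd_imp_le not_le zero_less_one order.strict_trans2)
    qed
    moreover have "0 \<le> (r * i) mod int n" "(r * i) mod int n < int n" using n by auto
    ultimately have "1 \<le> (r * i) mod int n" "(r * i) mod int n < int n" by linarith+
    then show ?thesis using i unfolding U_set_def aut_def by auto
  qed
  show "0 < mord n r" using mord_works(2)[OF n cop] .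
  show "(aut n r 0 ^^ mord n r) x = x" if x: "x \<in> U_set n" for x
  proof -
    obtain i where i: "x = (i, False)" "1 \<le> i" "i < int n" using x unfolding U_set_def by auto
    have "[r ^ mord n r = 1] (mod int n)" using mord_works(1)[OF n cop] by simp
    then have "[r ^ mord n r * i = 1 * i] (mod int n)" by (rule cong_mult) simp
    then have "(r ^ mord n r * i) mod int n = i" using i by (simp add: cong_def)
    then show ?thesis using iterU[where n=n and i=i and r=r and k="mord n r"] n i by simp
  qed
qed

lemma U_per:
  assumes n: "n > 0" and cop: "coprime r (int n)" and i: "i \<in> {1..<n}"
  shows "per (aut n r 0) (int i, False) = mord (n div gcd i n) r"
proof -
  interpret P: permN "U_set n" "aut n r 0" "mord n r" using U_permN[OF n cop] .
  define q where "q = n div gcd i n"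
  have gle: "gcd i n \<le> n" using n by (simp add: dvd_imp_le)
  have gpos: "gcd i n > 0" using n by simp
  have qpos: "q > 0" unfolding q_def using gle gpos by (simp add: div_greater_zero_iff)
  have "n = gcd i n * q" unfolding q_def by simp
  then have qdvd: "q dvd n" by (metis dvd_triv_right)
  have cq: "coprime r (int q)" using mord_dvd_sub[OF n cop qdvd qpos] by simp
  have xU: "(int i, False) \<in> U_set n" using i unfolding U_img by auto
  have iff: "(aut n r 0 ^^ k) (int i, False) = (int i, False) \<longleftrightarrow> mord q r dvd k" for k
  proof -
    have i0: "0 \<le> int i" "int i < int n" using i by auto
    have s1: "(aut n r 0 ^^ k) (int i, False) = ((r ^ k * int i) mod int n, False)"
      using iterU[OF n i0] .
    have im: "int i mod int n = int i" using i0 by simp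
    have "(aut n r 0 ^^ k) (int i, False) = (int i, False) \<longleftrightarrow> (r ^ k * int i) mod int n = int i mod int n"
      unfolding s1 im by simp
    also have "\<dots> \<longleftrightarrow> int n dvd r ^ k * int i - int i" by (rule mod_eq_dvd_iff)
    also have "r ^ k * int i - int i = (r ^ k - 1) * int i" by (simp add: left_diff_distrib)
    also have "int n dvd (r ^ k - 1) * int i \<longleftrightarrow> (int n div gcd (int n) (int i)) dvd r ^ k - 1"
      using n by (intro dvd_mult_gcd_iff) simp
    also have "gcd (int n) (int i) = int (gcd i n)" by (metis gcd.commute gcd_int_int_eq)
    also have "int n div int (gcd i n) = int q" unfolding q_def by (rule zdiv_int[symmetric])
    also have "int q dvd r ^ k - 1 \<longleftrightarrow> [r ^ k = 1] (mod int q)" by (simp add: cong_iff_dvd_diff cong_sym_eq)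
    also have "\<dots> \<longleftrightarrow> mord q r dvd k" by (rule mord_works(1)[OF qpos cq])
    finally show ?thesis .
  qed
  have "(aut n r 0 ^^ mord q r) (int i, False) = (int i, False)" using iff by simp
  then have "per (aut n r 0) (int i, False) dvd mord q r" using P.per_dvd[OF xU] by blast
  moreover have "mord q r dvd per (aut n r 0) (int i, False)"
    using P.per_basic(2)[OF xU] iff[of "per (aut n r 0) (int i, False)"] by simp
  ultimately show ?thesis unfolding q_def by (simp add: dvd_antisym)
qed

lemma card_U_class:
  assumes n: "n > 0" and d: "d > 1" "d dvd n"
  shows "card {i\<in>{1..<n}. n div gcd i n = d} = totient d"
proof -
  have nd: "n = (n div d) * d" using d by simp
  have ndpos: "n div d > 0" using nd n by (metis gr0I mult_is_0)
  have ndd: "n div (n div d) = d" using nd ndpos by (metis nonzero_mult_div_cancel_left less_not_refl2)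
  have "{i\<in>{1..<n}. n div gcd i n = d} = {k\<in>{0<..n}. gcd k n = n div d}"
  proof (intro equalityI subsetI)
    fix i assume "i \<in> {i\<in>{1..<n}. n div gcd i n = d}"
    then have i: "1 \<le> i" "i < n" "n div gcd i n = d" by auto
    have "n = gcd i n * (n div gcd i n)" by simp
    then have h: "n = gcd i n * d" using i(3) by simp
    have "n div d = (gcd i n * d) div d" using h by simp
    also have "\<dots> = gcd i n" using d by simp
    finally have "gcd i n = n div d" by simp
    then show "i \<in> {k\<in>{0<..n}. gcd k n = n div d}" using i by auto
  next
    fix i assume "i \<in> {k\<in>{0<..n}. gcd k n = n div d}"
    then have i: "0 < i" "i \<le> n" "gcd i n = n div d" by auto
    have "n div d < n" using d n by simp
    then have "i \<noteq> n" using i by auto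
    moreover have "n div gcd i n = d" using i(3) ndd by simp
    ultimately show "i \<in> {i\<in>{1..<n}. n div gcd i n = d}" using i by auto
  qed
  moreover have "n div d dvd n" using nd by (metis dvd_triv_left)
  ultimately show ?thesis using card_gcd_eq_totient[of n "n div d"] n ndd by simp
qed

theorem U_formula:
  assumes n: "n > 0" and cop: "coprime r (int n)"
  shows "real (ncycles (U_set n) (aut n r 0)) = (\<Sum>d | d > 1 \<and> d dvd n. real (totient d) / real (mord d r))"
proof -
  interpret P: permN "U_set n" "aut n r 0" "mord n r" using U_permN[OF n cop] .
  define T where "T = {d. d > 1 \<and> d dvd n}"
  have finT: "finite T"
  proof (rule finite_subset)
    show "T \<subseteq> {d. d dvd n}" unfolding T_def by auto
    show "finite {d. d dvd n}" using n by simp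
  qed
  have "real (ncycles (U_set n) (aut n r 0)) = (\<Sum>x\<in>U_set n. 1 / real (per (aut n r 0) x))"
    by (rule P.ncycles_sum)
  also have "\<dots> = (\<Sum>i\<in>{1..<n}. 1 / real (per (aut n r 0) (int i, False)))"
    unfolding U_img by (subst sum.reindex) (auto simp: inj_on_def)
  also have "\<dots> = (\<Sum>i\<in>{1..<n}. 1 / real (mord (n div gcd i n) r))"
    using U_per[OF n cop] by simp
  also have "\<dots> = (\<Sum>d\<in>T. \<Sum>i\<in>{i\<in>{1..<n}. n div gcd i n = d}. 1 / real (mord (n div gcd i n) r))"
  proof (rule sum.group[symmetric])
    show "finite {1..<n}" by simp
    show "finite T" by fact
    show "(\<lambda>i. n div gcd i n) ` {1..<n} \<subseteq> T"
    proof
      fix d assume "d \<in> (\<lambda>i. n div gcd i n) ` {1..<n}"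
      then obtain i where i: "1 \<le> i" "i < n" "d = n div gcd i n" by auto
      have "gcd i n \<le> i" using i by (intro gcd_le1_nat) auto
      then have glt: "gcd i n < n" using i(2) by linarith
      have nd: "n = gcd i n * d" using i(3) by simp
      have "d > 1"
      proof (rule ccontr)
        assume "\<not> d > 1"
        then have "d \<le> 1" by simp
        then have "gcd i n * d \<le> gcd i n * 1" by (intro mult_left_mono) auto
        then show False using nd glt by simp
      qed
      moreover have "d dvd n" using nd by (metis dvd_triv_left mult.commute)
      ultimately show "d \<in> T" unfolding T_def by simp
    qed
  qed
  also have "\<dots> = (\<Sum>d\<in>T. real (totient d) / real (mord d r))"
  proof (rule sum.cong[OF refl])
    fix d assume d: "d \<in> T"
    have "(\<Sum>i\<in>{i\<in>{1..<n}. n div gcd i n = d}. 1 / real (mord (n div gcd i n) r))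
        = (\<Sum>i\<in>{i\<in>{1..<n}. n div gcd i n = d}. 1 / real (mord d r))" by simp
    also have "\<dots> = real (card {i\<in>{1..<n}. n div gcd i n = d}) / real (mord d r)" by simp
    also have "\<dots> = real (totient d) / real (mord d r)" using card_U_class[OF n] d unfolding T_def by simp
    finally show "(\<Sum>i\<in>{i\<in>{1..<n}. n div gcd i n = d}. 1 / real (mord (n div gcd i n) r)) = real (totient d) / real (mord d r)" .
  qed
  finally show ?thesis unfolding T_def .
qed



lemma gcd_absorb_int: "gcd (a::int) (b * c) = gcd a (gcd a b * c)"
  by (metis (no_types, opaque_lifting) gcd.commute gcd.left_commute gcd_add1
    gcd_add_mult gcd_mult_distrib_int gcd_right_idem mult.commute)

lemma kappa_eq:
  assumes "d dvd n"
  shows "kappa d r t' = kappa d r (gcd t' (int n))"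
proof -
  have dn: "int d dvd int n" using assms by simp
  have dd: "gcd (int d) (int n) = int d" using dn by (simp add: gcd_proj1_iff)
  have "gcd (int d) (gcd t' (int n)) = gcd (gcd (int d) (int n)) t'" by (simp add: ac_simps)
  then have g: "gcd (int d) (gcd t' (int n)) = gcd (int d) t'" using dd by simp
  have "gcd (int d) (t' * S) = gcd (int d) (gcd t' (int n) * S)" for S
    using gcd_absorb_int[of "int d" t' S] gcd_absorb_int[of "int d" "gcd t' (int n)" S] g by simp
  then show ?thesis unfolding kappa_def by simp
qed

lemma ncycles_cong:
  assumes "\<And>x. x \<in> S \<Longrightarrow> orb f x = orb g x"
  shows "ncycles S f = ncycles S g"
  unfolding permN.ncycles_orb ncycles_def orb_def[symmetric] using assms by (simp cong: image_cong)

lemma ncycles_Un: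
  assumes "A \<inter> B = {}" "finite A" "finite B"
    and "\<And>x. x \<in> A \<Longrightarrow> orb f x \<subseteq> A" "\<And>x. x \<in> B \<Longrightarrow> orb f x \<subseteq> B"
  shows "ncycles (A \<union> B) f = ncycles A f + ncycles B f"
proof -
  have "orb f ` A \<inter> orb f ` B = {}"
  proof (rule ccontr)
    assume "orb f ` A \<inter> orb f ` B \<noteq> {}"
    then obtain a b where ab: "a \<in> A" "b \<in> B" "orb f a = orb f b" by auto
    have "a \<in> orb f a" unfolding orb_def by (auto intro: exI[of _ 0])
    then have "a \<in> B" using ab assms(5)[of b] by auto
    then show False using ab assms(1) by auto
  qed
  then show ?thesis unfolding ncycles_def orb_def[symmetric] image_Un
    using assms by (simp add: card_Un_disjoint)
qed



theorem theorem4p4: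
  fixes n :: nat and r t' t :: int
  assumes "n > 1" and "squarefree n" and "coprime r (int n)"
    and "t = gcd t' (int n)"
  shows "ncycles (dihedral n - {dih_one}) (aut n r t')
           = ncycles (U_set n) (aut n r 0) + ncycles (V_set n) (aut n r t)
       \<and> real (ncycles (U_set n) (aut n r 0))
           = (\<Sum>d | d > 1 \<and> d dvd n. real (totient d) / real (mord d r))
       \<and> real (ncycles (V_set n) (aut n r t))
           = (\<Sum>(d, l) \<in> {(d, l). 0 < d \<and> 0 < l \<and> d dvd n
                  \<and> l dvd (mord n r div gcd (kappa d r t) (mord n r))
                  \<and> gcd (r ^ (l * kappa d r t) - 1) (int n) = int d}.
                real d / real (kappa n r t)
                * real (totient (mord n r div (l * gcd (kappa d r t) (mord n r)))))"
proof -
  have n: "n > 0" using assms(1) by simp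
  note sq = assms(2) and cop = assms(3)
  define f where "f = aut n r t'"
  define g where "g = aut n r 0"
  interpret PU: permN "U_set n" g "mord n r" using U_permN[OF n cop] g_def by simp
  interpret PV: permN "V_set n" f "kappa n r t'" using V_permN[OF n cop] f_def by simp
  have split: "dihedral n - {dih_one} = U_set n \<union> V_set n"
    unfolding dihedral_def dih_one_def U_set_def V_set_def by auto
  have disj: "U_set n \<inter> V_set n = {}" unfolding U_set_def V_set_def by auto
  have fg: "f x = g x" if "x \<in> U_set n" for x
    using that unfolding f_def g_def aut_def U_set_def by auto
  have iter_eq: "(f ^^ k) x = (g ^^ k) x" if x: "x \<in> U_set n" for x k
  proof (induction k)
    case 0
    then show ?case by simp
  next
    case (Suc k)
    then show ?case using fg[OF PU.iter_in[OF x, of k]] by simp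
  qed
  have orbU: "orb f x = orb g x" if "x \<in> U_set n" for x
    unfolding orb_def using iter_eq[OF that] by simp
  have ncU: "ncycles (U_set n) f = ncycles (U_set n) g"
    by (rule ncycles_cong) (rule orbU)
  have "ncycles (dihedral n - {dih_one}) f = ncycles (U_set n) f + ncycles (V_set n) f"
    unfolding split
  proof (rule ncycles_Un[OF disj PU.fin PV.fin])
    show "orb f x \<subseteq> U_set n" if "x \<in> U_set n" for x using orbU[OF that] PU.orb_sub[OF that] by simp
    show "orb f x \<subseteq> V_set n" if "x \<in> V_set n" for x using PV.orb_sub[OF that] .
  qed
  moreover have "ncycles (V_set n) f = ncycles (V_set n) (aut n r t)"
  proof -
    have eqK: "kappa d r t' = kappa d r t" if "d dvd n" for d
      using kappa_eq[OF that, of r t'] assms(4) by simp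
    have "real (ncycles (V_set n) f) = real (ncycles (V_set n) (aut n r t))"
      unfolding f_def V_formula[OF n sq cop, of t'] V_formula[OF n sq cop, of t]
      using eqK[OF dvd_refl]
      by (intro sum.cong) (auto simp: eqK)
    then show ?thesis by simp
  qed
  ultimately have part1: "ncycles (dihedral n - {dih_one}) (aut n r t')
           = ncycles (U_set n) (aut n r 0) + ncycles (V_set n) (aut n r t)"
    using ncU f_def g_def by simp
  show ?thesis using part1 U_formula[OF n cop] V_formula[OF n sq cop, of t] by simp
qed


end
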